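(* Let $n\ge3$, $k\ge0$ with $k<n\le2k$. If $S\subseteq\mathrm{Inc}(A,B)$ is independent in $G_n^k$ and not reversible, then every strict alternating cycle contained in $S$ has size $3$.
   Context: For integers $n\ge3$, $k\ge0$, the crown $S_n^k$ is the poset with ground set $A\cup B$, $A=\{a_1,\dots,a_{n+k}\}$, $B=\{b_1,\dots,b_{n+k}\}$, indices cyclic modulo $n+k$; elements of $A$ are pairwise incomparable, as are elements of $B$, and $a_i$ is incomparable to $b_j$ when $j\in\{i,\dots,i+k\}$ (mod $n+k$), while $a_i<b_j$ otherwise. $\mathrm{Inc}(A,B)$ is the set of pairs $(a,b)\in A\times B$ with $a$ incomparable to $b$; $G_n^k$ has vertex set $\mathrm{Inc}(A,B)$ with $(a,b)$ adjacent to $(x,y)$ iff $a<y$ and $x<b$. A set $R\subseteq\mathrm{Inc}(A,B)$ is reversible if some linear extension $L$ of $S_n^k$ has $b<a$ in $L$ for all $(a,b)\in R$. An indexed set $\{(x_\alpha,y_\alpha):\alpha\in[m]\}\subseteq\mathrm{Inc}(A,B)$ is an alternating cycle of size $m$ if $x_\alpha\le y_{\alpha-1}$ for all $\alpha$ (indices cyclic mod $m$); it is strict if $x_\alpha\le y_\beta$ holds iff $\beta=\alpha-1$. *)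

theory Defs
  imports Main
begin

text \<open>Elements of the crown S_n^k: CA i stands for a_i, CB j for b_j, with indices in {0..<n+k}
  (cyclic modulo n+k).\<close>
datatype celt = CA nat | CB nat

definition crown_ground :: "nat \<Rightarrow> nat \<Rightarrow> celt set" where
  "crown_ground n k = CA ` {..<n+k} \<union> CB ` {..<n+k}"

definition crown_incomp_idx :: "nat \<Rightarrow> nat \<Rightarrow> nat \<Rightarrow> nat \<Rightarrow> bool" where
  "crown_incomp_idx n k i j \<longleftrightarrow> (\<exists>t\<le>k. j = (i + t) mod (n + k))"

definition crown_less :: "nat \<Rightarrow> nat \<Rightarrow> celt \<Rightarrow> celt \<Rightarrow> bool" where
  "crown_less n k x y \<longleftrightarrow> (\<exists>i j. x = CA i \<and> y = CB j \<and> i < n + k \<and> j < n + k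
       \<and> \<not> crown_incomp_idx n k i j)"

definition crown_le :: "nat \<Rightarrow> nat \<Rightarrow> celt \<Rightarrow> celt \<Rightarrow> bool" where
  "crown_le n k x y \<longleftrightarrow> x = y \<or> crown_less n k x y"

definition Inc :: "nat \<Rightarrow> nat \<Rightarrow> (celt \<times> celt) set" where
  "Inc n k = {(CA i, CB j) | i j. i < n + k \<and> j < n + k \<and> crown_incomp_idx n k i j}"

definition G_adj :: "nat \<Rightarrow> nat \<Rightarrow> celt \<times> celt \<Rightarrow> celt \<times> celt \<Rightarrow> bool" where
  "G_adj n k u v \<longleftrightarrow> u \<in> Inc n k \<and> v \<in> Inc n k \<and>
     crown_less n k (fst u) (snd v) \<and> crown_less n k (fst v) (snd u)"

definition G_independent :: "nat \<Rightarrow> nat \<Rightarrow> (celt \<times> celt) set \<Rightarrow> bool" where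
  "G_independent n k S \<longleftrightarrow> S \<subseteq> Inc n k \<and> (\<forall>u\<in>S. \<forall>v\<in>S. \<not> G_adj n k u v)"

definition linear_extension :: "nat \<Rightarrow> nat \<Rightarrow> celt rel \<Rightarrow> bool" where
  "linear_extension n k L \<longleftrightarrow> L \<subseteq> crown_ground n k \<times> crown_ground n k \<and>
     strict_linear_order_on (crown_ground n k) L \<and>
     (\<forall>x y. crown_less n k x y \<longrightarrow> (x, y) \<in> L)"

definition reversible :: "nat \<Rightarrow> nat \<Rightarrow> (celt \<times> celt) set \<Rightarrow> bool" where
  "reversible n k R \<longleftrightarrow> R \<subseteq> Inc n k \<and>
     (\<exists>L. linear_extension n k L \<and> (\<forall>(a, b)\<in>R. (b, a) \<in> L))"

text \<open>An alternating cycle of size m, indexed by {0..<m} with cyclic predecessor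
  (\<alpha> + m - 1) mod m; the indexing is injective (an indexed set of m elements).\<close>
definition alt_cycle :: "nat \<Rightarrow> nat \<Rightarrow> (nat \<Rightarrow> celt \<times> celt) \<Rightarrow> nat \<Rightarrow> bool" where
  "alt_cycle n k c m \<longleftrightarrow> 0 < m \<and> inj_on c {..<m} \<and> c ` {..<m} \<subseteq> Inc n k \<and>
     (\<forall>\<alpha><m. crown_le n k (fst (c \<alpha>)) (snd (c ((\<alpha> + m - 1) mod m))))"

definition strict_alt_cycle :: "nat \<Rightarrow> nat \<Rightarrow> (nat \<Rightarrow> celt \<times> celt) \<Rightarrow> nat \<Rightarrow> bool" where
  "strict_alt_cycle n k c m \<longleftrightarrow> alt_cycle n k c m \<and>
     (\<forall>\<alpha><m. \<forall>\<beta><m. crown_le n k (fst (c \<alpha>)) (snd (c \<beta>)) \<longleftrightarrow> \<beta> = (\<alpha> + m - 1) mod m)"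

end

theory Submission
  imports Defs
begin


definition inW :: "nat \<Rightarrow> nat \<Rightarrow> nat \<Rightarrow> nat \<Rightarrow> bool" where
  "inW N k p s \<longleftrightarrow> ((s \<le> p \<and> p \<le> s+k) \<or> p+N \<le> s+k)"

lemma L0: "a<b \<Longrightarrow> b<c \<Longrightarrow> c<d \<Longrightarrow> d<N \<Longrightarrow> s<N \<Longrightarrow> \<not> inW N k a s \<Longrightarrow> inW N k b s
  \<Longrightarrow> inW N k c s \<Longrightarrow> inW N k d s \<Longrightarrow> d - b \<le> k"
  unfolding inW_def by auto
lemma L1: "a<b \<Longrightarrow> b<c \<Longrightarrow> c<d \<Longrightarrow> d<N \<Longrightarrow> s<N \<Longrightarrow> \<not> inW N k b s \<Longrightarrow> inW N k a s
  \<Longrightarrow> inW N k c s \<Longrightarrow> inW N k d s \<Longrightarrow> N + a - c \<le> k"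
  unfolding inW_def by auto
lemma L2: "a<b \<Longrightarrow> b<c \<Longrightarrow> c<d \<Longrightarrow> d<N \<Longrightarrow> s<N \<Longrightarrow> \<not> inW N k c s \<Longrightarrow> inW N k a s
  \<Longrightarrow> inW N k b s \<Longrightarrow> inW N k d s \<Longrightarrow> N + b - d \<le> k"
  unfolding inW_def by auto
lemma L3: "a<b \<Longrightarrow> b<c \<Longrightarrow> c<d \<Longrightarrow> d<N \<Longrightarrow> s<N \<Longrightarrow> \<not> inW N k d s \<Longrightarrow> inW N k a s
  \<Longrightarrow> inW N k b s \<Longrightarrow> inW N k c s \<Longrightarrow> c - a \<le> k"
  unfolding inW_def by auto

lemma combP:
  assumes N: "2*k < N" and P: "finite P" "card P = 4" "\<forall>x\<in>P. x < N"
  and H: "\<forall>x\<in>P. \<exists>s<N. \<not> inW N k x s \<and> (\<forall>y\<in>P. y \<noteq> x \<longrightarrow> inW N k y s)"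
  shows False
proof -
  define xs where "xs = sorted_list_of_set P"
  have len: "length xs = 4" using P unfolding xs_def by simp
  have sxs: "sorted_wrt (<) xs" unfolding xs_def by simp
  have set: "set xs = P" using P unfolding xs_def by simp
  define a b c d where "a = xs!0" "b = xs!1" "c = xs!2" "d = xs!3"
  have xs: "xs = [a,b,c,d]" using len unfolding a_b_c_d_def
    by (simp add: list_eq_iff_nth_eq less_Suc_eq numeral_eq_Suc)
  have ord: "a<b" "b<c" "c<d" using sxs unfolding xs by auto
  have inP: "a\<in>P" "b\<in>P" "c\<in>P" "d\<in>P" using set unfolding xs by auto
  have dN: "d < N" using P(3) inP by auto
  obtain s0 where s0: "s0<N" "\<not> inW N k a s0" "\<forall>y\<in>P. y \<noteq> a \<longrightarrow> inW N k y s0" using H inP by blast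
  obtain s1 where s1: "s1<N" "\<not> inW N k b s1" "\<forall>y\<in>P. y \<noteq> b \<longrightarrow> inW N k y s1" using H inP by blast
  obtain s2 where s2: "s2<N" "\<not> inW N k c s2" "\<forall>y\<in>P. y \<noteq> c \<longrightarrow> inW N k y s2" using H inP by blast
  obtain s3 where s3: "s3<N" "\<not> inW N k d s3" "\<forall>y\<in>P. y \<noteq> d \<longrightarrow> inW N k y s3" using H inP by blast
  have "d - b \<le> k" using L0[OF ord dN s0(1,2)] s0(3) inP ord by auto
  moreover have "N + a - c \<le> k" using L1[OF ord dN s1(1,2)] s1(3) inP ord by auto
  moreover have "N + b - d \<le> k" using L2[OF ord dN s2(1,2)] s2(3) inP ord by auto
  moreover have "c - a \<le> k" using L3[OF ord dN s3(1,2)] s3(3) inP ord by auto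
  ultimately show False using N ord dN by linarith
qed

lemma comb:
  fixes N k :: nat
  assumes "2*k < N"
  and "p0<N" "p1<N" "p2<N" "p3<N" "s1<N" "s2<N" "s3<N" "s4<N"
  and "\<not> inW N k p0 s1" "inW N k p1 s1" "inW N k p2 s1" "inW N k p3 s1"
  and "\<not> inW N k p1 s2" "inW N k p0 s2" "inW N k p2 s2" "inW N k p3 s2"
  and "\<not> inW N k p2 s3" "inW N k p0 s3" "inW N k p1 s3" "inW N k p3 s3"
  and "\<not> inW N k p3 s4" "inW N k p0 s4" "inW N k p1 s4" "inW N k p2 s4"
  shows False
proof -
  have d: "p0 \<noteq> p1" "p0 \<noteq> p2" "p0 \<noteq> p3" "p1 \<noteq> p2" "p1 \<noteq> p3" "p2 \<noteq> p3"
    using assms by metis+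
  show False
    apply (rule combP[of k N "{p0,p1,p2,p3}"])
    using assms d by auto
qed

lemma incomp_iff:
  assumes "i < n + k" "j < n + k" "k < n"
  shows "crown_incomp_idx n k i j \<longleftrightarrow> ((i \<le> j \<and> j \<le> i + k) \<or> j + (n + k) \<le> i + k)"
proof
  assume "crown_incomp_idx n k i j"
  then obtain t where t: "t \<le> k" "j = (i + t) mod (n + k)" unfolding crown_incomp_idx_def by blast
  show "(i \<le> j \<and> j \<le> i + k) \<or> j + (n + k) \<le> i + k"
  proof (cases "i + t < n + k")
    case True then show ?thesis using t by simp
  next
    case False
    then have "(i + t) mod (n + k) = i + t - (n + k)"
      using assms t by (simp add: le_mod_geq)
    then show ?thesis using t False by simp
  qed
next
  assume h: "(i \<le> j \<and> j \<le> i + k) \<or> j + (n + k) \<le> i + k"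
  show "crown_incomp_idx n k i j"
  proof (cases "i \<le> j \<and> j \<le> i + k")
    case True
    then show ?thesis unfolding crown_incomp_idx_def using assms
      by (intro exI[of _ "j - i"]) auto
  next
    case False
    then have h2: "j + (n + k) \<le> i + k" using h by blast
    have "(i + (j + (n+k) - i)) mod (n + k) = j" using h2 assms by simp
    then show ?thesis unfolding crown_incomp_idx_def using h2
      by (intro exI[of _ "j + (n+k) - i"]) auto
  qed
qed

lemma le_iff:
  assumes "i < n + k" "j < n + k"
  shows "crown_le n k (CA i) (CB j) \<longleftrightarrow> \<not> crown_incomp_idx n k i j"
  using assms unfolding crown_le_def crown_less_def by auto

lemma less_iff:
  assumes "i < n + k" "j < n + k"
  shows "crown_less n k (CA i) (CB j) \<longleftrightarrow> \<not> crown_incomp_idx n k i j"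
  using assms unfolding crown_less_def by auto

theorem proposition5p1:
  fixes n k m :: nat and S :: "(celt \<times> celt) set" and c :: "nat \<Rightarrow> celt \<times> celt"
  assumes "n \<ge> 3" and "k < n" and "n \<le> 2 * k"
    and "S \<subseteq> Inc n k"
    and "G_independent n k S"
    and "\<not> reversible n k S"
    and "strict_alt_cycle n k c m"
    and "c ` {..<m} \<subseteq> S"
  shows "m = 3"
proof -
  define N where "N = n + k"
  have sc: "alt_cycle n k c m"
    "\<And>a b. a < m \<Longrightarrow> b < m \<Longrightarrow> crown_le n k (fst (c a)) (snd (c b)) \<longleftrightarrow> b = (a + m - 1) mod m"
    using assms(7) unfolding strict_alt_cycle_def by auto
  have m0: "0 < m" and cin: "\<And>a. a < m \<Longrightarrow> c a \<in> Inc n k"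
    using sc(1) unfolding alt_cycle_def by auto
  define I where "I a = (case fst (c a) of CA i \<Rightarrow> i | CB i \<Rightarrow> i)" for a
  define J where "J a = (case snd (c a) of CA i \<Rightarrow> i | CB i \<Rightarrow> i)" for a
  have cform: "c a = (CA (I a), CB (J a)) \<and> I a < N \<and> J a < N \<and> crown_incomp_idx n k (I a) (J a)"
    if "a < m" for a
    using cin[OF that] unfolding Inc_def I_def J_def N_def by auto
  have key: "crown_incomp_idx n k (I a) (J b) \<longleftrightarrow> b \<noteq> (a + m - 1) mod m"
    if "a < m" "b < m" for a b
  proof -
    have "crown_le n k (fst (c a)) (snd (c b)) \<longleftrightarrow> \<not> crown_incomp_idx n k (I a) (J b)"
      using cform[OF that(1)] cform[OF that(2)] le_iff[of "I a" n k "J b"] unfolding N_def by simp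
    then show ?thesis using sc(2)[OF that] by simp
  qed
  have inw: "crown_incomp_idx n k s p \<longleftrightarrow> ((s \<le> p \<and> p \<le> s+k) \<or> p+N \<le> s+k)"
    if "s < N" "p < N" for s p
    using incomp_iff[of s n k p] that assms(2) unfolding N_def by simp
  show ?thesis
  proof (rule ccontr)
    assume "m \<noteq> 3"
    moreover have "m \<noteq> 1"
    proof
      assume "m = 1"
      then show False using key[of 0 0] cform[of 0] by simp
    qed
    moreover have "m \<noteq> 2"
    proof
      assume m2: "m = 2"
      have l1: "crown_less n k (fst (c 0)) (snd (c 1))"
        using key[of 0 1] cform[of 0] cform[of 1] less_iff[of "I 0" n k "J 1"] m2 unfolding N_def by simp
      have l2: "crown_less n k (fst (c 1)) (snd (c 0))"
        using key[of 1 0] cform[of 0] cform[of 1] less_iff[of "I 1" n k "J 0"] m2 unfolding N_def by simp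
      have "c 0 \<in> S" "c 1 \<in> S" using assms(8) m2 by auto
      then show False using assms(5) l1 l2 cin m2 unfolding G_independent_def G_adj_def by force
    qed
    ultimately have m4: "m \<ge> 4" using m0 by linarith
    define q where "q = 4 mod m"
    have q: "q < m" "(q + m - 1) mod m = 3"
    proof -
      show "q < m" using m4 unfolding q_def by simp
      show "(q + m - 1) mod m = 3"
      proof (cases "m = 4")
        case True then show ?thesis unfolding q_def by simp
      next
        case False
        then have "q = 4" using m4 unfolding q_def by simp
        then show ?thesis using False m4 by simp
      qed
    qed
    have e2: "2 + m - 1 = 1 + m" and e3: "3 + m - 1 = 2 + m" by auto
    have p1: "(1 + m - 1) mod m = 0" "(2 + m - 1) mod m = 1" "(3 + m - 1) mod m = 2"
    proof -
      have "(1 + m) mod m = 1 mod m" by (rule mod_add_self2)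
      moreover have "(2 + m) mod m = 2 mod m" by (rule mod_add_self2)
      ultimately show "(1 + m - 1) mod m = 0" "(2 + m - 1) mod m = 1" "(3 + m - 1) mod m = 2"
        using m4 unfolding e2 e3 by auto
    qed
    have lt: "0 < m" "1 < m" "2 < m" "3 < m" using m4 by auto
    note bnds = cform[OF lt(1)] cform[OF lt(2)] cform[OF lt(3)] cform[OF lt(4)] cform[OF q(1)]
    have w: "inW N k (J u) (I t) \<longleftrightarrow> u \<noteq> (t + m - 1) mod m" if "t < m" "u < m" for t u
      using inw[of "I t" "J u"] cform[OF that(1)] cform[OF that(2)] key[OF that] by (simp add: inW_def)
    have Nb: "I t < N" "J t < N" if "t < m" for t using cform[OF that] by auto
    have kN: "2 * k < N" using assms(2) unfolding N_def by simp
    show False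
      apply (rule comb[of k N "J 0" "J 1" "J 2" "J 3" "I 1" "I 2" "I 3" "I q"])
      using kN Nb lt q(1) by (simp_all only: w lt q p1)
  qed
qed

end
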